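(* Let $r$ be a positive integer and $n\ge0$. Then $$E_n^{(r)}(x)=\frac{2^{r-1}}{(r-1)!}\sum_{\substack{0\le j\le r-1\\ 0\le k\le n/2}}(-1)^j\,s(r,r-j)\binom{n}{2k}r^{n-2k}\,E_{2k+r-j-1}\,E_{n-2k}\!\left(\frac{x}{r}\right).$$
   Context: For a positive integer $r$, the Euler polynomials of order $r$ are defined by $\sum_{n\ge0}E_n^{(r)}(x)\frac{t^n}{n!}=\left(\frac{2}{e^t+1}\right)^re^{xt}$. $E_n(x)=E_n^{(1)}(x)$ are the Euler polynomials and $E_m:=E_m(0)$. $s(n,l)$ denotes the (signed) Stirling numbers of the first kind, $x(x-1)\cdots(x-n+1)=\sum_l s(n,l)x^l$. *)

theory Defs
  imports "HOL-Computational_Algebra.Computational_Algebra"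
begin

definition euler_gf :: "nat \<Rightarrow> real \<Rightarrow> real fps" where
  "euler_gf r x = (fps_const 2 * inverse (fps_exp 1 + 1)) ^ r * fps_exp x"

definition euler_poly_ord :: "nat \<Rightarrow> nat \<Rightarrow> real \<Rightarrow> real" where
  "euler_poly_ord r n x = fact n * fps_nth (euler_gf r x) n"

definition euler_poly :: "nat \<Rightarrow> real \<Rightarrow> real" where
  "euler_poly n x = euler_poly_ord 1 n x"

definition euler_num :: "nat \<Rightarrow> real" where
  "euler_num m = euler_poly m 0"

definition stirling1s :: "nat \<Rightarrow> nat \<Rightarrow> int" where
  "stirling1s n l = coeff (\<Prod>i<n. [:- of_nat i, 1:]) l"

end

theory Submission imports Defs begin

definition fscale :: "real \<Rightarrow> real fps \<Rightarrow> real fps" where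
  "fscale c f = Abs_fps (\<lambda>n. c^n * f$n)"

lemma fscale_nth[simp]: "fscale c f $ n = c^n * f$n"
  by (simp add: fscale_def)

lemma fscale_mult: "fscale c (f*g) = fscale c f * fscale c g"
proof (rule fps_ext)
  fix n
  have "fscale c (f*g) $ n = (\<Sum>i=0..n. c^n * (f$i * g$(n-i)))"
    by (simp add: fps_mult_nth sum_distrib_left)
  also have "\<dots> = (\<Sum>i=0..n. (c^i * f$i) * (c^(n-i) * g$(n-i)))"
  proof (rule sum.cong)
    fix i assume "i \<in> {0..n}"
    then have "c^n = c^i * c^(n-i)" by (simp add: power_add[symmetric])
    then show "c^n * (f$i * g$(n-i)) = (c^i * f$i) * (c^(n-i) * g$(n-i))" by simp
  qed simp
  finally show "fscale c (f*g) $ n = (fscale c f * fscale c g) $ n"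
    by (simp add: fps_mult_nth)
qed

lemma fscale_add: "fscale c (f+g) = fscale c f + fscale c g"
  by (rule fps_ext) (simp add: algebra_simps)

lemma fscale_const[simp]: "fscale c (fps_const a) = fps_const a"
  by (rule fps_ext) (simp add: fps_const_def)

lemma fscale_one[simp]: "fscale c 1 = 1"
  using fscale_const[of c 1] by simp

lemma fscale_exp: "fscale c (fps_exp a) = fps_exp (c*a)"
  by (rule fps_ext) (simp add: power_mult_distrib)

lemma fscale_power: "fscale c (f^k) = (fscale c f)^k"
  by (induction k) (simp_all add: fscale_mult)

lemma fscale_inverse:
  assumes "f$0 \<noteq> 0"
  shows "fscale c (inverse f) = inverse (fscale c f)"
proof -
  have 1: "fscale c f * fscale c (inverse f) = 1"
    using fscale_mult[of c f "inverse f"] inverse_mult_eq_1'[OF assms] by simp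
  have 0: "(fscale c f) $ 0 \<noteq> 0" using assms by simp
  have "inverse (fscale c f) = inverse (fscale c f) * (fscale c f * fscale c (inverse f))"
    using 1 by simp
  also have "\<dots> = fscale c (inverse f)"
    using inverse_mult_eq_1[OF 0] by (simp add: mult.assoc[symmetric])
  finally show ?thesis by simp
qed

definition Ev :: "real fps \<Rightarrow> real fps" where
  "Ev f = Abs_fps (\<lambda>n. if even n then f$n else 0)"

lemma Ev_nth[simp]: "Ev f $ n = (if even n then f$n else 0)"
  by (simp add: Ev_def)

lemma Ev_eq: "Ev f = fps_const (1/2) * (f + fscale (-1) f)"
  by (rule fps_ext) auto

lemma deriv_pow_nth:
  "(fps_deriv ^^ c) f $ i = fact (i+c) / fact i * (f :: real fps) $ (i+c)"
proof (induction c arbitrary: i)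
  case 0 then show ?case by simp
next
  case (Suc c)
  have "(fps_deriv ^^ Suc c) f $ i = of_nat (i+1) * ((fps_deriv ^^ c) f $ (i+1))" by simp
  also have "\<dots> = of_nat (i+1) * (fact (i+1+c) / fact (i+1) * f $ (i+1+c))" using Suc by simp
  also have "\<dots> = fact (i + Suc c) / fact i * f $ (i + Suc c)"
    by (simp add: field_simps fact_Suc del: of_nat_Suc)
  finally show ?case .
qed


lemma coeff_lin: fixes a :: "'a::comm_ring_1" shows "coeff ([:a,1:] * p) l = a * coeff p l + (if l = 0 then 0 else coeff p (l-1))"
  by (cases l) (simp_all add: mult_pCons_left)

definition fp :: "nat \<Rightarrow> int poly" where
  "fp m = (\<Prod>i<m. [:- int (i+1), 1:])"

definition cc :: "nat \<Rightarrow> nat \<Rightarrow> real" where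
  "cc m l = (-1)^(m+l) * real_of_int (coeff (fp m) l)"

lemma fp_Suc: "fp (Suc m) = [:- int (m+1), 1:] * fp m"
  by (simp add: fp_def mult.commute)

lemma fp_high: "l > m \<Longrightarrow> coeff (fp m) l = 0"
proof (induction m arbitrary: l)
  case 0 then show ?case by (simp add: fp_def)
next
  case (Suc m)
  then show ?case using Suc.IH[of l] Suc.IH[of "l-1"] Suc.prems by (simp only: fp_Suc coeff_lin) auto
qed

lemma cc_high: "l > m \<Longrightarrow> cc m l = 0"
  by (simp add: cc_def fp_high)

lemma cc_Suc: "cc (Suc m) l = real (Suc m) * cc m l + (if l = 0 then 0 else cc m (l-1))"
proof (cases l)
  case 0 then show ?thesis by (simp add: cc_def fp_Suc coeff_lin algebra_simps)
next
  case (Suc k)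
  have "(-1::real)^(Suc m + Suc k) = - ((-1)^(m+Suc k))" by simp
  moreover have "(-1::real)^(Suc m + Suc k) = (-1)^(m+k)" by simp
  ultimately show ?thesis using Suc by (simp add: cc_def fp_Suc coeff_lin algebra_simps)
qed

lemma stirling_fp: "j \<le> m \<Longrightarrow> stirling1s (Suc m) (Suc m - j) = coeff (fp m) (m - j)"
proof -
  assume j: "j \<le> m"
  have "(\<Prod>i<Suc m. [:- of_nat i, 1:]) = [:- of_nat 0, 1:] * (\<Prod>i<m. [:- of_nat (Suc i), 1:] :: int poly)"
    by (rule prod.lessThan_Suc_shift)
  then have "(\<Prod>i<Suc m. [:- of_nat i, 1:]) = pCons 0 (fp m)"
    by (simp add: fp_def)
  moreover have "Suc m - j = Suc (m - j)" using j by simp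
  ultimately show ?thesis by (simp add: stirling1s_def)
qed

lemma cc_stirling: "j \<le> m \<Longrightarrow> cc m (m - j) = (-1)^j * real_of_int (stirling1s (Suc m) (Suc m - j))"
proof -
  assume j: "j \<le> m"
  have e: "m + (m-j) = j + 2*(m-j)" using j by simp
  have "(-1::real)^(m + (m-j)) = (-1)^j" unfolding e by (simp add: power_add power_mult)
  then show ?thesis using j by (simp add: cc_def stirling_fp)
qed

fun Lop :: "nat \<Rightarrow> real fps \<Rightarrow> real fps" where
  "Lop 0 f = f"
| "Lop (Suc m) f = fps_deriv (Lop m f) + fps_const (real (Suc m)) * Lop m f"

lemma Lop_sum: "Lop m f = (\<Sum>l\<le>m. fps_const (cc m l) * (fps_deriv^^l) f)"
proof (induction m)
  case 0 then show ?case by (simp add: cc_def fp_def)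
next
  case (Suc m)
  have d: "fps_deriv (Lop m f) = (\<Sum>l\<le>m. fps_const (cc m l) * (fps_deriv^^(Suc l)) f)"
    by (simp add: Suc fps_deriv_sum)
  have "(\<Sum>l\<le>Suc m. fps_const (cc (Suc m) l) * (fps_deriv^^l) f)
      = (\<Sum>l\<le>Suc m. fps_const (real (Suc m)) * (fps_const (cc m l) * (fps_deriv^^l) f))
        + (\<Sum>l\<le>Suc m. fps_const (if l = 0 then 0 else cc m (l-1)) * (fps_deriv^^l) f)"
    by (simp add: cc_Suc sum.distrib[symmetric] algebra_simps fps_const_add[symmetric] fps_const_mult[symmetric]
             del: fps_const_add fps_const_mult)
  also have "(\<Sum>l\<le>Suc m. fps_const (real (Suc m)) * (fps_const (cc m l) * (fps_deriv^^l) f))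
      = fps_const (real (Suc m)) * Lop m f"
    by (simp add: Suc sum_distrib_left cc_high)
  also have "(\<Sum>l\<le>Suc m. fps_const (if l = 0 then 0 else cc m (l-1)) * (fps_deriv^^l) f)
      = fps_deriv (Lop m f)"
    unfolding d by (subst sum.atMost_Suc_shift) simp
  finally show ?case by simp
qed


abbreviation "TT \<equiv> fps_exp (1::real)"
abbreviation "WW \<equiv> TT + 1"
abbreviation "HH \<equiv> fps_const 2 * inverse WW"

lemma WW0: "WW $ 0 \<noteq> 0" by simp

lemma WWinv: "WW * inverse WW = 1" using inverse_mult_eq_1'[OF WW0] .

lemma deriv_IW: "fps_deriv (inverse WW) = - TT * inverse WW ^ 2"
  using fps_inverse_deriv[OF WW0] by simp

lemma Lop_H: "Lop m HH = fps_const (2 * fact m) * inverse WW ^ (Suc m)"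
proof (induction m)
  case 0 then show ?case by simp
next
  case (Suc m)
  have d: "fps_deriv (inverse WW ^ Suc m) = - (fps_const (real (Suc m)) * TT * inverse WW ^ (Suc (Suc m)))"
    apply (simp only: fps_deriv_power' deriv_IW diff_Suc_1)
    apply (simp add: power2_eq_square algebra_simps fps_of_nat[symmetric])
    done
  have e: "inverse WW ^ Suc m = WW * inverse WW ^ Suc (Suc m)"
  proof -
    have "WW * inverse WW ^ Suc (Suc m) = (WW * inverse WW) * inverse WW ^ Suc m"
      by (simp only: power_Suc mult.assoc)
    then show ?thesis using WWinv by simp
  qed
  have "Lop (Suc m) HH = fps_const (2 * fact m) * fps_deriv (inverse WW ^ Suc m)
      + fps_const (real (Suc m)) * (fps_const (2 * fact m) * inverse WW ^ Suc m)"
    by (simp only: Lop.simps Suc fps_deriv_mult_const_left)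
  also have "\<dots> = fps_const (2 * fact m) * (- (fps_const (real (Suc m)) * TT * inverse WW ^ (Suc (Suc m))))
      + fps_const (real (Suc m)) * (fps_const (2 * fact m) * (WW * inverse WW ^ Suc (Suc m)))"
    unfolding d by (subst e) (rule refl)
  also have "\<dots> = fps_const (2 * fact m) * fps_const (real (Suc m)) * inverse WW ^ Suc (Suc m)"
    by (simp add: algebra_simps)
  also have "\<dots> = fps_const (2 * fact (Suc m)) * inverse WW ^ Suc (Suc m)"
    by (simp add: algebra_simps)
  finally show ?case .
qed


lemma inv_unique:
  fixes f g :: "real fps"
  assumes "f$0 \<noteq> 0" "f * g = 1"
  shows "inverse f = g"
proof -
  have "inverse f = inverse f * (f * g)" using assms by simp
  also have "\<dots> = g" using inverse_mult_eq_1[OF assms(1)] by (simp add: mult.assoc[symmetric])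
  finally show ?thesis .
qed

lemma euler_num_eq: "euler_num q = fact q * HH $ q"
  by (simp add: euler_num_def euler_poly_def euler_poly_ord_def euler_gf_def)

lemma euler_poly_eq: "euler_poly q y = fact q * (HH * fps_exp y) $ q"
  by (simp add: euler_poly_def euler_poly_ord_def euler_gf_def)

lemma even_reindex:
  fixes g :: "nat \<Rightarrow> real"
  shows "(\<Sum>i=0..n. if even i then g i else 0) = (\<Sum>k\<le>n div 2. g (2*k))"
proof -
  have "(\<Sum>i=0..n. if even i then g i else 0) = sum g {i\<in>{0..n}. even i}"
    by (subst sum.inter_filter) auto
  also have "{i\<in>{0..n}. even i} = (\<lambda>k. 2*k) ` {..n div 2}"
  proof (rule set_eqI, rule iffI)
    fix i assume "i \<in> {i\<in>{0..n}. even i}"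
    then obtain k where "i = 2*k" "2*k \<le> n" by auto
    then show "i \<in> (\<lambda>k. 2*k) ` {..n div 2}" by auto
  next
    fix i assume "i \<in> (\<lambda>k. 2*k) ` {..n div 2}"
    then show "i \<in> {i\<in>{0..n}. even i}" by auto
  qed
  also have "sum g ((\<lambda>k. 2*k) ` {..n div 2}) = (\<Sum>k\<le>n div 2. g (2*k))"
    by (subst sum.reindex) (auto simp: inj_on_def)
  finally show ?thesis .
qed

lemma inner:
  fixes x :: real and r n c :: nat
  assumes r: "r \<ge> 1"
  shows "(\<Sum>k\<le>n div 2. of_nat (n choose (2*k)) * of_nat r ^ (n - 2*k) * euler_num (2*k + c)
            * euler_poly (n - 2*k) (x / of_nat r))
       = fact n * (Ev ((fps_deriv^^c) HH) * fscale (real r) (HH * fps_exp (x / real r))) $ n"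
proof -
  have "(Ev ((fps_deriv^^c) HH) * fscale (real r) (HH * fps_exp (x / real r))) $ n
      = (\<Sum>i=0..n. if even i then ((fps_deriv^^c) HH) $ i * (real r ^ (n-i) * (HH * fps_exp (x / real r)) $ (n-i)) else 0)"
    unfolding fps_mult_nth[of "Ev ((fps_deriv^^c) HH)"] by (rule sum.cong) auto
  also have "\<dots> = (\<Sum>k\<le>n div 2. ((fps_deriv^^c) HH) $ (2*k) * (real r ^ (n-2*k) * (HH * fps_exp (x / real r)) $ (n-2*k)))"
    by (rule even_reindex)
  finally have 1: "fact n * (Ev ((fps_deriv^^c) HH) * fscale (real r) (HH * fps_exp (x / real r))) $ n
      = (\<Sum>k\<le>n div 2. fact n * (((fps_deriv^^c) HH) $ (2*k) * (real r ^ (n-2*k) * (HH * fps_exp (x / real r)) $ (n-2*k))))"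
    by (simp add: sum_distrib_left)
  show ?thesis unfolding 1
  proof (rule sum.cong)
    fix k assume "k \<in> {..n div 2}"
    then have kn: "2*k \<le> n" by auto
    have b: "fact (2*k) * fact (n - 2*k) * real (n choose (2*k)) = fact n"
      using binomial_fact_lemma[OF kn] by (metis of_nat_fact of_nat_mult)
    have "fact n * (((fps_deriv^^c) HH) $ (2*k) * (real r ^ (n-2*k) * (HH * fps_exp (x / real r)) $ (n-2*k)))
        = (fact (2*k) * fact (n - 2*k) * real (n choose (2*k))) * (fact (2*k+c) / fact (2*k) * HH $ (2*k+c)) * real r ^ (n-2*k) * (HH * fps_exp (x / real r)) $ (n-2*k)"
      by (simp add: b deriv_pow_nth)
    also have "\<dots> = of_nat (n choose (2*k)) * of_nat r ^ (n - 2*k) * euler_num (2*k + c)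
            * euler_poly (n - 2*k) (x / of_nat r)"
      by (simp add: euler_num_eq euler_poly_eq)
    finally show "of_nat (n choose (2*k)) * of_nat r ^ (n - 2*k) * euler_num (2*k + c)
            * euler_poly (n - 2*k) (x / of_nat r) = fact n * (((fps_deriv^^c) HH) $ (2*k) * (real r ^ (n-2*k) * (HH * fps_exp (x / real r)) $ (n-2*k)))"
      by (rule sym)
  qed simp
qed

lemma Ev_lin:
  fixes S :: "nat set"
  shows "(\<Sum>l\<in>S. w l * (Ev (F l) * G) $ n) = (Ev (\<Sum>l\<in>S. fps_const (w l) * F l) * G) $ n"
proof -
  have "Ev (\<Sum>l\<in>S. fps_const (w l) * F l) = (\<Sum>l\<in>S. fps_const (w l) * Ev (F l))"
    by (rule fps_ext) (simp add: fps_sum_nth sum_distrib_left)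
  then show ?thesis
    by (simp add: sum_distrib_right fps_sum_nth mult.assoc)
qed


lemma closed_form:
  fixes x :: real and m :: nat
  shows "HH ^ Suc m * fps_exp x =
    fps_const (2 ^ m / fact m) * (Ev (Lop m HH) * fscale (real (Suc m)) (HH * fps_exp (x / real (Suc m))))"
proof -
  define I where "I = inverse WW"
  define U where "U = TT ^ Suc m + 1"
  have WI: "WW * I = 1" unfolding I_def by (rule WWinv)
  have TT': "fps_exp (-1) * TT = 1" by (simp add: fps_exp_add_mult[symmetric])
  have IV: "inverse (fps_exp (-1) + 1) = TT * I"
  proof (rule inv_unique)
    show "(fps_exp (-1) + 1) $ 0 \<noteq> (0::real)" by simp
    have "(fps_exp (-1) + 1) * (TT * I) = (fps_exp (-1) * TT + TT) * I" by (simp add: algebra_simps)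
    also have "\<dots> = WW * I" using TT' by (simp add: add.commute)
    finally show "(fps_exp (-1) + 1) * (TT * I) = 1" using WI by simp
  qed
  have U0: "U $ 0 \<noteq> 0" unfolding U_def fps_exp_power_mult by simp
  have UI: "U * inverse U = 1" using inverse_mult_eq_1'[OF U0] .
  have expr: "fps_exp (real (Suc m)) = TT ^ Suc m"
    by (simp only: fps_exp_power_mult mult.right_neutral)
  have G: "fscale (real (Suc m)) (HH * fps_exp (x / real (Suc m))) = fps_const 2 * inverse U * fps_exp x"
    by (simp add: fscale_mult fscale_inverse fscale_add fscale_exp expr U_def del: of_nat_Suc)
  have P: "Lop m HH = fps_const (2 * fact m) * I ^ Suc m" by (simp add: Lop_H I_def)
  have sP: "fscale (-1) (Lop m HH) = fps_const (2 * fact m) * (TT * I) ^ Suc m"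
    by (simp add: Lop_H fscale_mult fscale_power fscale_inverse fscale_add fscale_exp IV)
  have "fps_const (2 ^ m / fact m) * (Ev (Lop m HH) * fscale (real (Suc m)) (HH * fps_exp (x / real (Suc m))))
      = fps_const (2 ^ m / fact m) * (fps_const (1/2) * (fps_const (2 * fact m) * I ^ Suc m + fps_const (2 * fact m) * (TT * I) ^ Suc m)
         * (fps_const 2 * inverse U * fps_exp x))"
    unfolding Ev_eq by (subst sP) (simp only: P G)
  also have "\<dots> = (fps_const (2 ^ m / fact m) * fps_const (1/2) * fps_const (2 * fact m) * fps_const 2)
        * (I ^ Suc m + (TT * I) ^ Suc m) * inverse U * fps_exp x"
    by (simp only: algebra_simps)
  also have "fps_const (2 ^ m / fact m) * fps_const (1/2) * fps_const (2 * fact m) * fps_const 2 = fps_const (2 ^ Suc m :: real)"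
    by (simp only: fps_const_mult) simp
  also have "(I ^ Suc m + (TT * I) ^ Suc m) = I ^ Suc m * U"
    unfolding U_def by (simp add: power_mult_distrib algebra_simps)
  also have "fps_const (2 ^ Suc m) * (I ^ Suc m * U) * inverse U * fps_exp x = fps_const (2 ^ Suc m) * I ^ Suc m * (U * inverse U) * fps_exp x"
    by (simp only: mult.assoc)
  also have "\<dots> = fps_const (2 ^ Suc m) * I ^ Suc m * fps_exp x"
    by (simp add: UI)
  also have "\<dots> = HH ^ Suc m * fps_exp x"
    by (simp add: I_def power_mult_distrib fps_const_power)
  finally show ?thesis by simp
qed


lemma rev_sum: fixes g :: "nat \<Rightarrow> real" shows "(\<Sum>j\<le>m. g (m - j)) = (\<Sum>j\<le>m. (g j :: real))"
  using sum.nat_diff_reindex[of g "Suc m"] by (simp add: lessThan_Suc_atMost)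

theorem mainTheorem8:
  fixes r n :: nat and x :: real
  assumes "r \<ge> 1"
  shows "euler_poly_ord r n x =
    2 ^ (r - 1) / fact (r - 1) *
    (\<Sum>j\<le>r - 1. \<Sum>k\<le>n div 2.
       (-1) ^ j * of_int (stirling1s r (r - j)) * of_nat (n choose (2 * k)) *
       of_nat r ^ (n - 2 * k) * euler_num (2 * k + r - j - 1) *
       euler_poly (n - 2 * k) (x / of_nat r))"
proof -
  obtain m where r: "r = Suc m" using assms by (cases r) auto
  define GG where "GG = fscale (real (Suc m)) (HH * fps_exp (x / real (Suc m)))"
  define X where "X l = (Ev ((fps_deriv^^l) HH) * GG) $ n" for l
  have lhs: "euler_poly_ord r n x = 2 ^ m / fact m * (fact n * (\<Sum>l\<le>m. cc m l * X l))"
  proof -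
    have a: "euler_poly_ord r n x = fact n * (HH ^ Suc m * fps_exp x) $ n"
      by (simp add: euler_poly_ord_def euler_gf_def r)
    have b: "(HH ^ Suc m * fps_exp x) $ n = (fps_const (2 ^ m / fact m) * (Ev (Lop m HH) * GG)) $ n"
      by (simp only: closed_form GG_def)
    have c: "(Ev (Lop m HH) * GG) $ n = (\<Sum>l\<le>m. cc m l * X l)"
      unfolding X_def Lop_sum by (rule Ev_lin[symmetric])
    show ?thesis using a b c by simp
  qed
  have inner_j: "(\<Sum>k\<le>n div 2.
       (-1) ^ j * of_int (stirling1s r (r - j)) * of_nat (n choose (2 * k)) *
       of_nat r ^ (n - 2 * k) * euler_num (2 * k + r - j - 1) *
       euler_poly (n - 2 * k) (x / of_nat r)) = fact n * (cc m (m - j) * X (m - j))"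
    if j: "j \<in> {..r-1}" for j
  proof -
    have jm: "j \<le> m" using j r by simp
    have "(\<Sum>k\<le>n div 2.
       (-1) ^ j * of_int (stirling1s r (r - j)) * of_nat (n choose (2 * k)) *
       of_nat r ^ (n - 2 * k) * euler_num (2 * k + r - j - 1) *
       euler_poly (n - 2 * k) (x / of_nat r))
      = cc m (m - j) * (\<Sum>k\<le>n div 2. of_nat (n choose (2*k)) * of_nat r ^ (n - 2*k) * euler_num (2*k + (m - j))
            * euler_poly (n - 2*k) (x / of_nat r))"
    proof -
      have e: "2 * k + r - j - 1 = 2*k + (m - j)" for k using jm r by simp
      show ?thesis unfolding e cc_stirling[OF jm] r[symmetric] sum_distrib_left
        by (rule sum.cong) (simp_all add: mult.assoc)
    qed
    also have "\<dots> = cc m (m - j) * (fact n * X (m - j))"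
      unfolding X_def GG_def using inner[of r n "m - j" x] assms r by simp
    finally show ?thesis by simp
  qed
  have "(\<Sum>j\<le>r - 1. \<Sum>k\<le>n div 2.
       (-1) ^ j * of_int (stirling1s r (r - j)) * of_nat (n choose (2 * k)) *
       of_nat r ^ (n - 2 * k) * euler_num (2 * k + r - j - 1) *
       euler_poly (n - 2 * k) (x / of_nat r)) = (\<Sum>j\<le>m. fact n * (cc m (m - j) * X (m - j)))"
    using inner_j r by (intro sum.cong) auto
  also have "\<dots> = (\<Sum>j\<le>m. fact n * (cc m j * X j))"
    by (rule rev_sum)
  also have "\<dots> = fact n * (\<Sum>l\<le>m. cc m l * X l)"
    by (simp add: sum_distrib_left)
  finally show ?thesis using lhs r by simp
qed

end
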